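(* For all $n\ge1$, $a_{\{0101,0102,0112,0120,0121\}}(n)=(n-1)^2+1$.
   Context: An ascent in an integer sequence $s_1\cdots s_m$ is an index $j$ with $s_j<s_{j+1}$; $\mathrm{asc}$ denotes the number of ascents. An ascent sequence is a sequence $x_1\cdots x_n$ of nonnegative integers with $x_1=0$ and $x_i\le 1+\mathrm{asc}(x_1\cdots x_{i-1})$ for all $i\ge2$. The reduction $\mathrm{red}(w)$ of an integer sequence $w$ replaces the $i$-th smallest distinct letter of $w$ by $i-1$; a pattern is a reduced sequence. A sequence $x$ contains a pattern $p=p_1\cdots p_k$ if there are indices $i_1<\cdots<i_k$ with $\mathrm{red}(x_{i_1}\cdots x_{i_k})=p$; otherwise $x$ avoids $p$. For a finite set $P$ of patterns, $a_P(n)$ denotes the number of ascent sequences of length $n$ avoiding every pattern in $P$. *)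

theory Defs
  imports Main
begin

definition asc :: "nat list \<Rightarrow> nat" where
  "asc s = card {j. Suc j < length s \<and> s ! j < s ! Suc j}"

(* ascent sequences: x_1 = 0 and x_i <= 1 + asc(x_1...x_{i-1}) for i >= 2 (0-based indices here) *)
definition is_ascent_seq :: "nat list \<Rightarrow> bool" where
  "is_ascent_seq x \<longleftrightarrow> x \<noteq> [] \<and> x ! 0 = 0 \<and>
     (\<forall>i. 0 < i \<and> i < length x \<longrightarrow> x ! i \<le> 1 + asc (take i x))"

definition red :: "nat list \<Rightarrow> nat list" where
  "red w = map (\<lambda>a. card {b \<in> set w. b < a}) w"

definition contains :: "nat list \<Rightarrow> nat list \<Rightarrow> bool" where
  "contains x p \<longleftrightarrow> (\<exists>I. I \<subseteq> {..<length x} \<and> red (nths x I) = p)"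

definition avoids :: "nat list \<Rightarrow> nat list \<Rightarrow> bool" where
  "avoids x p \<longleftrightarrow> \<not> contains x p"

definition a_P :: "nat list set \<Rightarrow> nat \<Rightarrow> nat" where
  "a_P P n = card {x. length x = n \<and> is_ascent_seq x \<and> (\<forall>p\<in>P. avoids x p)}"

end

theory Submission
  imports Defs
begin


definition bad :: "nat \<Rightarrow> nat \<Rightarrow> nat \<Rightarrow> nat \<Rightarrow> bool" where
  "bad a b c d \<longleftrightarrow> (a=c \<and> b=d \<and> a<b) \<or> (a=c \<and> a<b \<and> b<d) \<or> (a<b \<and> b=c \<and> c<d)
     \<or> (a=d \<and> a<b \<and> b<c) \<or> (a<b \<and> b=d \<and> b<c)"

definition Q :: "nat list \<Rightarrow> bool" where
  "Q x \<longleftrightarrow> (\<exists>i j k l. i<j \<and> j<k \<and> k<l \<and> l<length x \<and> bad (x!i) (x!j) (x!k) (x!l))"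

abbreviation PP :: "nat list set" where
  "PP \<equiv> {[0,1,0,1], [0,1,0,2], [0,1,1,2], [0,1,2,0], [0,1,2,1]}"

lemma red_less:
  assumes "i < length w" "j < length w"
  shows "(red w ! i < red w ! j) \<longleftrightarrow> (w!i < w!j)"
proof -
  have r: "red w ! i = card {b\<in>set w. b < w!i}" "red w ! j = card {b\<in>set w. b < w!j}"
    using assms by (auto simp: red_def)
  show ?thesis
  proof
    assume "w!i < w!j"
    then have "{b\<in>set w. b < w!i} \<subset> {b\<in>set w. b < w!j}" using assms(1) nth_mem by fastforce
    then show "red w ! i < red w ! j" unfolding r by (intro psubset_card_mono) auto
  next
    assume a: "red w ! i < red w ! j"
    show "w!i < w!j"
    proof (rule ccontr)
      assume "\<not> w!i < w!j"
      then have "{b\<in>set w. b < w!j} \<subseteq> {b\<in>set w. b < w!i}" by auto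
      then have "card {b\<in>set w. b < w!j} \<le> card {b\<in>set w. b < w!i}" by (intro card_mono) auto
      then show False using a unfolding r by simp
    qed
  qed
qed

lemma red4_ord:
  assumes h: "red [a,b,c,d] = [p0,p1,p2,p3]"
  shows "(a<b \<longleftrightarrow> p0<p1) \<and> (b<a \<longleftrightarrow> p1<p0) \<and> (a<c \<longleftrightarrow> p0<p2) \<and> (c<a \<longleftrightarrow> p2<p0)
    \<and> (a<d \<longleftrightarrow> p0<p3) \<and> (d<a \<longleftrightarrow> p3<p0) \<and> (b<c \<longleftrightarrow> p1<p2) \<and> (c<b \<longleftrightarrow> p2<p1)
    \<and> (b<d \<longleftrightarrow> p1<p3) \<and> (d<b \<longleftrightarrow> p3<p1) \<and> (c<d \<longleftrightarrow> p2<p3) \<and> (d<c \<longleftrightarrow> p3<p2)"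
proof -
  have L: "\<And>i j. i<4 \<Longrightarrow> j<4 \<Longrightarrow> ([a,b,c,d]!i < [a,b,c,d]!j) \<longleftrightarrow> ([p0,p1,p2,p3]!i < [p0,p1,p2,p3]!j)"
    using red_less[of _ "[a,b,c,d]"] h by simp
  show ?thesis
    using L[of 0 1] L[of 1 0] L[of 0 2] L[of 2 0] L[of 0 3] L[of 3 0] L[of 1 2] L[of 2 1]
      L[of 1 3] L[of 3 1] L[of 2 3] L[of 3 2] by simp
qed

lemma red4_bad: assumes h: "red [a,b,c,d] \<in> PP" shows "bad a b c d"
proof -
  from h consider "red [a,b,c,d] = [0,1,0,1]" | "red [a,b,c,d] = [0,1,0,2]" | "red [a,b,c,d] = [0,1,1,2]"
    | "red [a,b,c,d] = [0,1,2,0]" | "red [a,b,c,d] = [0,1,2,1]" by blast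
  then show ?thesis
  proof cases
    case 1 from red4_ord[OF this] show ?thesis unfolding bad_def by auto
  next
    case 2 from red4_ord[OF this] show ?thesis unfolding bad_def by auto
  next
    case 3 from red4_ord[OF this] show ?thesis unfolding bad_def by auto
  next
    case 4 from red4_ord[OF this] show ?thesis unfolding bad_def by auto
  next
    case 5 from red4_ord[OF this] show ?thesis unfolding bad_def by auto
  qed
qed
lemma Collect_insert_filter: "{y \<in> insert z A. P y} = (if P z then insert z {y\<in>A. P y} else {y\<in>A. P y})"
  by auto

lemma r1: "a<b \<Longrightarrow> red [a,b,a,b] = [0,1,0,1]"
proof -
  assume h: "a<b"
  have "set [a,b,a,b] = {a,b}" by auto
  moreover have "{y\<in>{a,b}. y<a} = {}" "{y\<in>{a,b}. y<b} = {a}" using h by auto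
  ultimately show ?thesis by (simp add: red_def)
qed
lemma r2: "a<b \<Longrightarrow> b<d \<Longrightarrow> red [a,b,a,d] = [0,1,0,2]"
proof -
  assume h: "a<b" "b<d"
  have "set [a,b,a,d] = {a,b,d}" by auto
  moreover have "{y\<in>{a,b,d}. y<a} = {}" "{y\<in>{a,b,d}. y<b} = {a}" "{y\<in>{a,b,d}. y<d} = {a,b}" using h by auto
  ultimately show ?thesis using h by (simp add: red_def)
qed
lemma r3: "a<b \<Longrightarrow> b<d \<Longrightarrow> red [a,b,b,d] = [0,1,1,2]"
proof -
  assume h: "a<b" "b<d"
  have "set [a,b,b,d] = {a,b,d}" by auto
  moreover have "{y\<in>{a,b,d}. y<a} = {}" "{y\<in>{a,b,d}. y<b} = {a}" "{y\<in>{a,b,d}. y<d} = {a,b}" using h by auto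
  ultimately show ?thesis using h by (simp add: red_def)
qed
lemma r4: "a<b \<Longrightarrow> b<c \<Longrightarrow> red [a,b,c,a] = [0,1,2,0]"
proof -
  assume h: "a<b" "b<c"
  have "set [a,b,c,a] = {a,b,c}" by auto
  moreover have "{y\<in>{a,b,c}. y<a} = {}" "{y\<in>{a,b,c}. y<b} = {a}" "{y\<in>{a,b,c}. y<c} = {a,b}" using h by auto
  ultimately show ?thesis using h by (simp add: red_def)
qed
lemma r5: "a<b \<Longrightarrow> b<c \<Longrightarrow> red [a,b,c,b] = [0,1,2,1]"
proof -
  assume h: "a<b" "b<c"
  have "set [a,b,c,b] = {a,b,c}" by auto
  moreover have "{y\<in>{a,b,c}. y<a} = {}" "{y\<in>{a,b,c}. y<b} = {a}" "{y\<in>{a,b,c}. y<c} = {a,b}" using h by auto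
  ultimately show ?thesis using h by (simp add: red_def)
qed
lemma bad_red: assumes "bad a b c d" shows "red [a,b,c,d] \<in> PP"
  using assms unfolding bad_def
  by (elim disjE conjE; simp add: r1 r2 r3 r4 r5)

lemma nths_eq: "nths xs I = map (nth xs) (filter (\<lambda>i. i\<in>I) [0..<length xs])"
proof -
  have "zip xs [0..<length xs] = map (\<lambda>i. (xs!i, i)) [0..<length xs]"
    by (rule nth_equalityI) auto
  then show ?thesis by (simp add: nths_def filter_map comp_def)
qed

lemma contains_Q: assumes "contains x p" "p \<in> PP" shows "Q x"
proof -
  obtain I where I: "red (nths x I) = p" using assms(1) unfolding contains_def by blast
  define idx where "idx = filter (\<lambda>i. i\<in>I) [0..<length x]"
  have nx: "nths x I = map (nth x) idx" unfolding idx_def by (rule nths_eq)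
  have "length (red (nths x I)) = 4" using I assms(2) by auto
  then have "length idx = 4" by (simp add: red_def nx)
  then obtain i j k l where ijkl: "idx = [i,j,k,l]"
    by (auto simp: length_Suc_conv numeral_eq_Suc)
  have "sorted_wrt (<) idx" unfolding idx_def by (intro sorted_wrt_filter) simp
  then have o: "i<j" "j<k" "k<l" using ijkl by auto
  have "l \<in> set idx" using ijkl by simp
  then have "l < length x" unfolding idx_def by simp
  moreover have "red [x!i, x!j, x!k, x!l] \<in> PP" using I assms(2) nx ijkl by simp
  then have "bad (x!i) (x!j) (x!k) (x!l)" by (rule red4_bad)
  ultimately show ?thesis unfolding Q_def using o by blast
qed

lemma Q_contains: assumes "Q x" shows "\<exists>p\<in>PP. contains x p"
proof -
  obtain i j k l where o: "i<j" "j<k" "k<l" "l<length x" and b: "bad (x!i) (x!j) (x!k) (x!l)"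
    using assms unfolding Q_def by blast
  define I where "I = {i,j,k,l}"
  have "filter (\<lambda>m. m\<in>I) [0..<length x] = [i,j,k,l]"
  proof (rule sorted_distinct_set_unique)
    show "sorted (filter (\<lambda>m. m\<in>I) [0..<length x])" by (intro sorted_wrt_filter) simp
    show "distinct (filter (\<lambda>m. m\<in>I) [0..<length x])" by simp
    show "sorted [i,j,k,l]" using o by simp
    show "distinct [i,j,k,l]" using o by simp
    show "set (filter (\<lambda>m. m\<in>I) [0..<length x]) = set [i,j,k,l]" using o unfolding I_def by auto
  qed
  then have "nths x I = [x!i, x!j, x!k, x!l]" by (simp add: nths_eq)
  moreover have "I \<subseteq> {..<length x}" using o unfolding I_def by auto
  ultimately have "contains x (red [x!i, x!j, x!k, x!l])" unfolding contains_def by metis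
  then show ?thesis using bad_red[OF b] by blast
qed

lemma avoid_iff: "(\<forall>p\<in>PP. avoids x p) \<longleftrightarrow> \<not> Q x"
  using contains_Q Q_contains unfolding avoids_def by blast



definition fA :: "nat \<Rightarrow> nat \<Rightarrow> nat \<Rightarrow> nat list" where
  "fA n s t = map (\<lambda>i. if s \<le> i \<and> i < t then 1 else 0) [0..<n]"

definition fB :: "nat \<Rightarrow> nat \<Rightarrow> nat \<Rightarrow> nat list" where
  "fB n s e = map (\<lambda>i. if i < s then 0 else min i e - s + 1) [0..<n]"

definition inE :: "nat \<Rightarrow> nat list \<Rightarrow> bool" where
  "inE n x \<longleftrightarrow> x = replicate n 0 \<or> (\<exists>s t. 1 \<le> s \<and> s < t \<and> t \<le> n \<and> x = fA n s t)
     \<or> (\<exists>s e. 1 \<le> s \<and> s < e \<and> e < n \<and> x = fB n s e)"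

lemma asc_map: "asc (map f [0..<n]) = card {j. Suc j < n \<and> f j < f (Suc j)}"
  unfolding asc_def by (intro arg_cong[where f=card] Collect_cong) auto

lemma asc_zero: "asc (replicate n 0) = 0"
proof -
  have "replicate n (0::nat) = map (\<lambda>_. 0) [0..<n]" by (simp add: map_replicate_const)
  then show ?thesis by (simp add: asc_map)
qed

lemma asc_fA: "asc (fA n s t) \<le> 1"
proof -
  have "{j. Suc j < n \<and> (if s \<le> j \<and> j < t then 1 else 0::nat) < (if s \<le> Suc j \<and> Suc j < t then 1 else 0)} \<subseteq> {s - 1}"
    by (auto split: if_splits)
  then have "card {j. Suc j < n \<and> (if s \<le> j \<and> j < t then 1 else 0::nat) < (if s \<le> Suc j \<and> Suc j < t then 1 else 0)} \<le> 1"
    using card_mono[of "{s-1}"] by fastforce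
  then show ?thesis unfolding fA_def asc_map .
qed

lemma asc_fB: assumes "1 \<le> s" "s < e" shows "asc (fB n s e) \<le> e - s + 1"
proof -
  have "{j. Suc j < n \<and> (if j < s then 0 else min j e - s + 1) < (if Suc j < s then 0 else min (Suc j) e - s + 1)} \<subseteq> {s - 1..<e}"
    using assms by (auto split: if_splits)
  then have "card {j. Suc j < n \<and> (if j < s then 0 else min j e - s + 1) < (if Suc j < s then 0 else min (Suc j) e - s + 1)} \<le> card {s - 1..<e}"
    by (intro card_mono) auto
  moreover have "card {s-1..<e} = e - s + 1" using assms by simp
  moreover have "asc (fB n s e) = card {j. Suc j < n \<and> (if j < s then 0 else min j e - s + 1) < (if Suc j < s then 0 else min (Suc j) e - s + 1)}"
    unfolding fB_def asc_map by (rule refl)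
  ultimately show ?thesis by linarith
qed

lemma asc_snoc:
  assumes "is_ascent_seq (x @ [v])" "x \<noteq> []"
  shows "is_ascent_seq x" "v \<le> 1 + asc x"
proof -
  have x0: "x ! 0 = 0" using assms unfolding is_ascent_seq_def by (simp add: nth_append)
  have "\<forall>i. 0 < i \<and> i < length x \<longrightarrow> x ! i \<le> 1 + asc (take i x)"
  proof (intro allI impI)
    fix i assume i: "0 < i \<and> i < length x"
    then have "(x@[v]) ! i \<le> 1 + asc (take i (x@[v]))" using assms(1) unfolding is_ascent_seq_def by simp
    then show "x ! i \<le> 1 + asc (take i x)" using i by (simp add: nth_append)
  qed
  then show "is_ascent_seq x" using x0 assms(2) unfolding is_ascent_seq_def by simp
  have "0 < length x \<and> length x < length (x@[v])" using assms(2) by simp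
  with assms(1) have "(x@[v]) ! length x \<le> 1 + asc (take (length x) (x@[v]))"
    unfolding is_ascent_seq_def by blast
  then show "v \<le> 1 + asc x" by simp
qed

lemma Q_snoc: assumes "Q x" shows "Q (x @ [v])"
proof -
  obtain i j k l where o: "i<j" "j<k" "k<l" "l<length x" and b: "bad (x!i) (x!j) (x!k) (x!l)"
    using assms unfolding Q_def by blast
  have "(x@[v])!i = x!i" "(x@[v])!j = x!j" "(x@[v])!k = x!k" "(x@[v])!l = x!l"
    using o by (simp_all add: nth_append)
  then have "bad ((x@[v])!i) ((x@[v])!j) ((x@[v])!k) ((x@[v])!l)" using b by simp
  moreover have "l < length (x@[v])" using o by simp
  ultimately show ?thesis unfolding Q_def using o by blast
qed



lemma inE_Z: "inE n (replicate n 0)" unfolding inE_def by simp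
lemma inE_A: "1 \<le> s \<Longrightarrow> s < t \<Longrightarrow> t \<le> n \<Longrightarrow> inE n (fA n s t)" unfolding inE_def by blast
lemma inE_B: "1 \<le> s \<Longrightarrow> s < e \<Longrightarrow> e < n \<Longrightarrow> inE n (fB n s e)" unfolding inE_def by blast

lemma main_dir: "is_ascent_seq x \<Longrightarrow> \<not> Q x \<Longrightarrow> inE (length x) x"
proof (induction x rule: rev_induct)
  case Nil then show ?case by (simp add: is_ascent_seq_def)
next
  case (snoc v x)
  show ?case
  proof (cases "x = []")
    case True
    then have "v = 0" using snoc.prems(1) by (simp add: is_ascent_seq_def)
    then show ?thesis using True inE_Z[of 1] by simp
  next
    case False
    note as = asc_snoc[OF snoc.prems(1) False]
    have "\<not> Q x" using Q_snoc snoc.prems(2) by blast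
    then have E: "inE (length x) x" using snoc.IH[OF as(1)] by blast
    define m where "m = length x"
    have m1: "1 \<le> m" using False m_def by (cases x) auto
    have qv: False if o: "i<j" "j<k" "k<m" "bad (x!i) (x!j) (x!k) v" for i j k
    proof -
      have "(x@[v])!i = x!i" "(x@[v])!j = x!j" "(x@[v])!k = x!k" "(x@[v])!m = v"
        using o by (simp_all add: nth_append m_def)
      then have "i<j \<and> j<k \<and> k<m \<and> m < length (x@[v]) \<and> bad ((x@[v])!i) ((x@[v])!j) ((x@[v])!k) ((x@[v])!m)"
        using o m_def by simp
      then have "Q (x@[v])" unfolding Q_def by blast
      then show False using snoc.prems(2) by blast
    qed
    have lenv: "length (x@[v]) = Suc m" by (simp add: m_def)
    have E': "inE m x" using E m_def by simp
    from E' consider (Z) "x = replicate m 0"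
      | (A) s t where "1\<le>s" "s<t" "t\<le>m" "x = fA m s t"
      | (B) s e where "1\<le>s" "s<e" "e<m" "x = fB m s e" unfolding inE_def by blast
    then show ?thesis
    proof cases
      case Z
      then have "v \<le> 1" using as(2) asc_zero by simp
      then consider "v=0" | "v=1" by linarith
      then show ?thesis
      proof cases
        case 1
        then have "x@[v] = replicate (Suc m) 0" using Z by (simp add: replicate_append_same)
        then show ?thesis using lenv inE_Z[of "Suc m"] by simp
      next
        case 2
        have "x@[v] = fA (Suc m) m (Suc m)" unfolding fA_def using Z 2
          by (intro nth_equalityI) (auto simp: nth_append)
        then show ?thesis using lenv inE_A[of m "Suc m" "Suc m"] m1 by simp
      qed
    next
      case A
      have xA: "x!i = (if s \<le> i \<and> i < t then 1 else 0)" if "i<m" for i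
        using that by (simp add: A(4) fA_def)
      have "v \<le> 2" using as(2) asc_fA[of m s t] A(4) by simp
      then consider "v=0" | "v=1" | "v=2" by linarith
      then show ?thesis
      proof cases
        case 1
        have "x@[v] = fA (Suc m) s t" unfolding fA_def using A 1
          by (intro nth_equalityI) (auto simp: nth_append fA_def)
        then show ?thesis using lenv inE_A[of s t "Suc m"] A by simp
      next
        case 2
        show ?thesis
        proof (cases "t = m")
          case True
          have "x@[v] = fA (Suc m) s (Suc m)" unfolding fA_def using A 2 True
            by (intro nth_equalityI) (auto simp: nth_append fA_def)
          then show ?thesis using lenv inE_A[of s "Suc m" "Suc m"] A by simp
        next
          case False
          then have "t < m" using A by simp
          then show ?thesis using qv[of 0 s t] A xA[of 0] xA[of s] xA[of t] 2 by (simp add: bad_def)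
        qed
      next
        case 3
        show ?thesis
        proof (cases "t = m")
          case True
          show ?thesis
          proof (cases "t = Suc s")
            case True
            have "x@[v] = fB (Suc m) s m" unfolding fB_def using A 3 True \<open>t = m\<close>
              by (intro nth_equalityI) (auto simp: nth_append fA_def numeral_2_eq_2)
            then show ?thesis using lenv inE_B[of s m "Suc m"] A True \<open>t = m\<close> by simp
          next
            case False
            then have "Suc s < m" using A \<open>t = m\<close> by simp
            then show ?thesis using qv[of 0 s "Suc s"] A xA[of 0] xA[of s] xA[of "Suc s"] 3 \<open>t = m\<close>
              by (simp add: bad_def)
          qed
        next
          case False
          then have "t < m" using A by simp
          then show ?thesis using qv[of 0 s t] A xA[of 0] xA[of s] xA[of t] 3 by (simp add: bad_def)
        qed
      qed
    next
      case B
      have xB: "x!i = (if i < s then 0 else min i e - s + 1)" if "i<m" for i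
        using that by (simp add: B(4) fB_def)
      define K where "K = e - s + 1"
      have K2: "K \<ge> 2" using B K_def by simp
      have "v \<le> K + 1" using as(2) asc_fB[of s e m] B K_def by simp
      then consider "v = K" | "v = K + 1" | "v = 0" | "0 < v \<and> v < K" by linarith
      then show ?thesis
      proof cases
        case 1
        have "x@[v] = fB (Suc m) s e" unfolding fB_def using B 1 K_def
          by (intro nth_equalityI) (auto simp: nth_append fB_def)
        then show ?thesis using lenv inE_B[of s e "Suc m"] B by simp
      next
        case 2
        show ?thesis
        proof (cases "Suc e = m")
          case True
          have "x@[v] = fB (Suc m) s m" unfolding fB_def using B 2 K_def True
            by (intro nth_equalityI) (auto simp: nth_append fB_def min_def)
          then show ?thesis using lenv inE_B[of s m "Suc m"] B True by simp
        next
          case False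
          then have "Suc e < m" using B by simp
          then show ?thesis using qv[of 0 e "Suc e"] B xB[of 0] xB[of e] xB[of "Suc e"] 2 K_def
            by (simp add: bad_def)
        qed
      next
        case 3
        show ?thesis using qv[of 0 s e] B xB[of 0] xB[of s] xB[of e] 3 K_def K2
          by (simp add: bad_def)
      next
        case 4
        have "s + v - 1 < e" "s + v - 1 \<ge> s" "0 < s + v - 1" using 4 K_def B by auto
        then show ?thesis using qv[of 0 "s + v - 1" e] B xB[of 0] xB[of "s+v-1"] xB[of e] 4 K_def
          by (simp add: bad_def)
      qed
    qed
  qed
qed



lemma asc_fB_ge: assumes "1 \<le> s" "s < e" "s < i"
  shows "min (i-1) e - s + 1 \<le> asc (fB i s e)"
proof -
  let ?S = "{j. Suc j < i \<and> (if j < s then 0 else min j e - s + 1) < (if Suc j < s then 0 else min (Suc j) e - s + 1)}"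
  have "{s-1..<min (i-1) e} \<subseteq> ?S" using assms by (auto simp: min_def)
  moreover have "finite ?S" by (rule finite_subset[of _ "{..<i}"]) auto
  ultimately have "card {s-1..<min (i-1) e} \<le> card ?S" by (rule card_mono[rotated])
  moreover have "card {s-1..<min (i-1) e} = min (i-1) e - s + 1" using assms by (simp add: min_def) presburger
  moreover have "asc (fB i s e) = card ?S" unfolding fB_def asc_map by (rule refl)
  ultimately show ?thesis by linarith
qed

lemma E_dir: assumes "1 \<le> n" "inE n x" shows "length x = n \<and> is_ascent_seq x \<and> \<not> Q x"
proof -
  from assms(2) consider (Z) "x = replicate n 0"
      | (A) s t where "1\<le>s" "s<t" "t\<le>n" "x = fA n s t"
      | (B) s e where "1\<le>s" "s<e" "e<n" "x = fB n s e" unfolding inE_def by blast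
  then show ?thesis
  proof cases
    case Z
    have "is_ascent_seq x" using Z assms(1) unfolding is_ascent_seq_def by auto
    moreover have "\<not> Q x" using Z unfolding Q_def bad_def by auto
    ultimately show ?thesis using Z by simp
  next
    case A
    have "is_ascent_seq x" using A assms(1) unfolding is_ascent_seq_def fA_def by auto
    moreover have "\<not> Q x" using A unfolding Q_def bad_def fA_def by auto
    ultimately show ?thesis using A by (simp add: fA_def)
  next
    case B
    define g where "g i = (if i < s then 0 else min i e - s + 1)" for i
    have xg: "x!i = g i" if "i<n" for i using that B(4) by (simp add: fB_def g_def)
    have mono: "g i \<le> g j" if "i \<le> j" for i j using that unfolding g_def by (auto simp: min_def)
    have plat: "g j = 0 \<or> g l' \<le> g j" if "j < k" "g j = g k" for j k l'
      using that B unfolding g_def by (auto simp: min_def split: if_splits)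
    have "\<not> Q x"
    proof
      assume "Q x"
      then obtain i j k l where o: "i<j" "j<k" "k<l" "l<n" and b: "bad (x!i) (x!j) (x!k) (x!l)"
        using B unfolding Q_def by (auto simp: fB_def)
      have b': "bad (g i) (g j) (g k) (g l)" using b o xg by simp
      have m1: "g i \<le> g j" "g j \<le> g k" "g k \<le> g l" using o mono by auto
      show False using b' m1 plat[of j k l] o unfolding bad_def by auto
    qed
    moreover have "is_ascent_seq x"
      unfolding is_ascent_seq_def
    proof (intro conjI allI impI)
      show "x \<noteq> []" using B by (simp add: fB_def)
      show "x ! 0 = 0" using B xg[of 0] by (simp add: g_def)
      fix i assume i: "0 < i \<and> i < length x"
      then have iN: "i < n" using B by (simp add: fB_def)
      have tk: "take i x = fB i s e" using B iN by (simp add: fB_def take_map)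
      show "x ! i \<le> 1 + asc (take i x)"
      proof (cases "s < i")
        case True
        have "min (i-1) e - s + 1 \<le> asc (fB i s e)" using asc_fB_ge[OF B(1,2) True] .
        then show ?thesis using xg[OF iN] tk True B unfolding g_def by (auto simp: min_def split: if_splits; linarith)
      next
        case False
        then show ?thesis using xg[OF iN] B unfolding g_def by (auto simp: min_def)
      qed
    qed
    ultimately show ?thesis using B by (simp add: fB_def)
  qed
qed



definition PA :: "nat \<Rightarrow> (nat \<times> nat) set" where
  "PA n = {(s,t). 1 \<le> s \<and> s < t \<and> t \<le> n}"

lemma PA_finite: "finite (PA n)"
  by (rule finite_subset[of _ "{..n} \<times> {..n}"]) (auto simp: PA_def)

lemma card_PA: "2 * card (PA n) = n * (n - 1)"
proof (induction n)
  case 0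
  have "PA 0 = {}" by (auto simp: PA_def)
  then show ?case by simp
next
  case (Suc n)
  have eq: "PA (Suc n) = PA n \<union> (\<lambda>s. (s, Suc n)) ` {1..n}" by (auto simp: PA_def)
  have disj: "PA n \<inter> (\<lambda>s. (s, Suc n)) ` {1..n} = {}" by (auto simp: PA_def)
  have "card (PA (Suc n)) = card (PA n) + card ((\<lambda>s. (s, Suc n)) ` {1..n})"
    unfolding eq using PA_finite[of n] disj by (intro card_Un_disjoint) auto
  also have "card ((\<lambda>s. (s, Suc n)) ` {1..n}) = n"
    by (subst card_image) (auto simp: inj_on_def)
  finally show ?case using Suc.IH by (cases n) (auto simp: algebra_simps)
qed

lemma fA_nth: "i < n \<Longrightarrow> fA n s t ! i = (if s \<le> i \<and> i < t then 1 else 0)"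
  by (simp add: fA_def)
lemma fB_nth: "i < n \<Longrightarrow> fB n s e ! i = (if i < s then 0 else min i e - s + 1)"
  by (simp add: fB_def)

lemma inj_fA: "inj_on (\<lambda>(s,t). fA n s t) (PA n)"
proof (rule inj_onI, clarify)
  fix s t s' t' assume a: "(s,t) \<in> PA n" "(s',t') \<in> PA n" "fA n s t = fA n s' t'"
  have H: "(s \<le> i \<and> i < t) \<longleftrightarrow> (s' \<le> i \<and> i < t')" if "i < n" for i
    using arg_cong[OF a(3), of "\<lambda>x. x ! i"] that by (auto simp: fA_nth split: if_splits)
  have r: "1 \<le> s" "s < t" "t \<le> n" "1 \<le> s'" "s' < t'" "t' \<le> n" using a(1,2) by (auto simp: PA_def)
  have "s = s'" using H[of s] H[of s'] r by (cases "s < s'") auto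
  moreover have "t = t'" using H[of t] H[of t'] r \<open>s = s'\<close> by (cases "t < t'"; cases "t' < n"; cases "t < n") auto
  ultimately show "s = s' \<and> t = t'" by simp
qed

lemma inj_fB: "inj_on (\<lambda>(s,e). fB n s e) (PA (n-1))"
proof (rule inj_onI, clarify)
  fix s t s' t' assume a: "(s,t) \<in> PA (n-1)" "(s',t') \<in> PA (n-1)" "fB n s t = fB n s' t'"
  have H: "(if i < s then 0 else min i t - s + 1) = (if i < s' then 0 else min i t' - s' + 1)" if "i < n" for i
    using arg_cong[OF a(3), of "\<lambda>x. x ! i"] that by (simp add: fB_nth)
  have r: "1 \<le> s" "s < t" "t < n" "1 \<le> s'" "s' < t'" "t' < n" using a(1,2) by (auto simp: PA_def)
  have "s = s'" using H[of s] H[of s'] r by (cases "s < s'") (auto simp: min_def split: if_splits)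
  moreover have "t = t'" using H[of t] H[of t'] r \<open>s = s'\<close> by (auto simp: min_def split: if_splits)
  ultimately show "s = s' \<and> t = t'" by simp
qed

lemma set_eq: assumes "1 \<le> n"
  shows "{x. length x = n \<and> is_ascent_seq x \<and> (\<forall>p\<in>PP. avoids x p)}
    = {replicate n 0} \<union> (\<lambda>(s,t). fA n s t) ` PA n \<union> (\<lambda>(s,e). fB n s e) ` PA (n-1)"
proof -
  have "{x. length x = n \<and> is_ascent_seq x \<and> (\<forall>p\<in>PP. avoids x p)} = {x. inE n x}"
    using main_dir E_dir[OF assms] avoid_iff by blast
  also have "{x. inE n x} = {replicate n 0} \<union> (\<lambda>(s,t). fA n s t) ` PA n \<union> (\<lambda>(s,e). fB n s e) ` PA (n-1)"
  proof (intro equalityI subsetI)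
    fix x assume "x \<in> {x. inE n x}"
    then consider (Z) "x = replicate n 0"
      | (A) s t where "1\<le>s" "s<t" "t\<le>n" "x = fA n s t"
      | (B) s e where "1\<le>s" "s<e" "e<n" "x = fB n s e" unfolding inE_def by blast
    then show "x \<in> {replicate n 0} \<union> (\<lambda>(s,t). fA n s t) ` PA n \<union> (\<lambda>(s,e). fB n s e) ` PA (n-1)"
    proof cases
      case Z then show ?thesis by simp
    next
      case A
      then have "x \<in> (\<lambda>(s,t). fA n s t) ` PA n" by (intro rev_image_eqI[of "(s,t)"]) (auto simp: PA_def)
      then show ?thesis by blast
    next
      case B
      then have "x \<in> (\<lambda>(s,e). fB n s e) ` PA (n-1)" by (intro rev_image_eqI[of "(s,e)"]) (auto simp: PA_def)
      then show ?thesis by blast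
    qed
  next
    fix x assume "x \<in> {replicate n 0} \<union> (\<lambda>(s,t). fA n s t) ` PA n \<union> (\<lambda>(s,e). fB n s e) ` PA (n-1)"
    then show "x \<in> {x. inE n x}"
      using inE_Z[of n] inE_A[of _ _ n] inE_B[of _ _ n] by (auto simp: PA_def)
  qed
  finally show ?thesis .
qed

theorem count: assumes "n \<ge> 1"
  shows "a_P PP n = (n - 1)^2 + 1"
proof -
  let ?A = "(\<lambda>(s,t). fA n s t) ` PA n" and ?B = "(\<lambda>(s,e). fB n s e) ` PA (n-1)"
  have fin: "finite ?A" "finite ?B" using PA_finite by auto
  have d1: "replicate n 0 \<notin> ?A"
  proof
    assume "replicate n 0 \<in> ?A"
    then obtain s t where st: "(s,t) \<in> PA n" "replicate n 0 = fA n s t" by auto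
    then have "s < n" by (auto simp: PA_def)
    then show False using arg_cong[OF st(2), of "\<lambda>x. x ! s"] st(1) by (auto simp: fA_nth PA_def)
  qed
  have d2: "replicate n 0 \<notin> ?B"
  proof
    assume "replicate n 0 \<in> ?B"
    then obtain s t where st: "(s,t) \<in> PA (n-1)" "replicate n 0 = fB n s t" by auto
    then have "s < n" by (auto simp: PA_def)
    then show False using arg_cong[OF st(2), of "\<lambda>x. x ! s"] st(1) by (auto simp: fB_nth PA_def)
  qed
  have d3: "?A \<inter> ?B = {}"
  proof (rule ccontr)
    assume "?A \<inter> ?B \<noteq> {}"
    then obtain s t s' e where st: "(s,t) \<in> PA n" "(s',e) \<in> PA (n-1)" "fA n s t = fB n s' e" by auto
    then have en: "e < n" "s' < e" by (auto simp: PA_def)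
    have "fB n s' e ! e = e - s' + 1" using en by (simp add: fB_nth)
    moreover have "fA n s t ! e \<le> 1" using en by (simp add: fA_nth)
    ultimately show False using st(3) en by simp
  qed
  have "a_P PP n = card ({replicate n 0} \<union> ?A \<union> ?B)"
    unfolding a_P_def set_eq[OF assms] ..
  also have "\<dots> = 1 + card ?A + card ?B"
    using fin d1 d2 d3 by (subst card_Un_disjoint; auto)+
  also have "card ?A = card (PA n)" by (rule card_image[OF inj_fA])
  also have "card ?B = card (PA (n-1))" by (rule card_image[OF inj_fB])
  finally have c: "a_P PP n = 1 + card (PA n) + card (PA (n-1))" .
  have c1: "2 * card (PA n) = n * (n-1)" and c2: "2 * card (PA (n-1)) = (n-1) * (n-1-1)" using card_PA by auto
  obtain m where m: "n = Suc m" using assms by (cases n) auto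
  have "2 * (card (PA n) + card (PA (n-1))) = 2 * m^2"
    using c1 c2 m by (cases m) (auto simp: algebra_simps power2_eq_square)
  then show ?thesis using c m by simp
qed


theorem theorem5p3:
  fixes n :: nat
  assumes "n \<ge> 1"
  shows "a_P {[0,1,0,1], [0,1,0,2], [0,1,1,2], [0,1,2,0], [0,1,2,1]} n = (n - 1)^2 + 1"
  using count[OF assms] by simp

end
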